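(* Let $(Q,P)$ be a weakly quasi-lattice ordered group and let $\Lambda$ be a $P$-graph with $\mathrm{FA}(\Lambda)\neq\emptyset$. With $\mathcal{X}(\Lambda)*P=\{(x,m)\in\mathcal{X}(\Lambda)\times P: x\cap\Lambda^m\neq\emptyset\}$ and $\mathrm{dom}(m)=\{x\in\mathcal{X}(\Lambda): x\cap\Lambda^m\neq\emptyset\}$, the semigroup action $(\mathcal{X}(\Lambda),P,T)$, $T(x,m)=\{\mu\in\Lambda: x(0,m)\mu\in x\}$, is directed: for all $m,n\in P$ with $\mathrm{dom}(m)\cap\mathrm{dom}(n)\neq\emptyset$ there is $l\in P$ with $m,n\le l$ and $\mathrm{dom}(m)\cap\mathrm{dom}(n)\subseteq\mathrm{dom}(l)$.
   Context: $(Q,P)$ weakly quasi-lattice ordered: $Q$ a discrete group, $P\subseteq Q$ a subsemigroup containing the identity $e$ with $P\cap P^{-1}=\{e\}$, and, with $p\le r$ meaning $pq=r$ for some $q\in P$, any two elements of $P$ with a common upper bound have a least common upper bound. A $P$-graph is a countable small category $\Lambda$ (range/source $r,s$) with a functor $d:\Lambda\to P$ with unique factorisation (if $d(\lambda)=pq$ there are unique $\mu,\nu$ with $\lambda=\mu\nu$, $d(\mu)=p$, $d(\nu)=q$). Write $\Lambda^m=d^{-1}(m)$, $\lambda\Lambda=\{\lambda\mu: s(\lambda)=r(\mu)\}$, $\mu\preceq\lambda$ iff $\lambda\in\mu\Lambda$. $\mathrm{FA}(\Lambda)$ is the set of $\lambda$ such that for all $\mu\in\lambda\Lambda,\nu\in\Lambda$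 there is a finite $J\subseteq\Lambda$ with $\mu\Lambda\cap\nu\Lambda=\bigcup_{\kappa\in J}\kappa\Lambda$. A filter is a nonempty hereditary and directed subset of $\Lambda$ (w.r.t. $\preceq$); for a filter $x$, $d|_x$ is injective, and $x(0,m)$ denotes the unique element of $x\cap\Lambda^m$ when nonempty. Path space $\mathcal{X}(\Lambda)=\{x\text{ filter}: x\cap\mathrm{FA}(\Lambda)\neq\emptyset\}$. $(\mathcal{X}(\Lambda),P,T)$ is a semigroup action in the sense that $(x,e)\in\mathcal{X}(\Lambda)*P$ with $T(x,e)=x$, and $(x,mn)\in\mathcal{X}(\Lambda)*P$ iff $(x,m),(T(x,m),n)\in\mathcal{X}(\Lambda)*P$, with $T(T(x,m),n)=T(x,mn)$. *)

theory Defs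
  imports "HOL-Algebra.Group" "HOL-Library.Countable_Set"
begin

definition pos_le :: "('q, 'b) monoid_scheme \<Rightarrow> 'q set \<Rightarrow> 'q \<Rightarrow> 'q \<Rightarrow> bool" where
  "pos_le G P p r \<longleftrightarrow> (\<exists>q\<in>P. p \<otimes>\<^bsub>G\<^esub> q = r)"

definition wqlo :: "('q, 'b) monoid_scheme \<Rightarrow> 'q set \<Rightarrow> bool" where
  "wqlo G P \<longleftrightarrow>
     group G \<and> P \<subseteq> carrier G \<and> \<one>\<^bsub>G\<^esub> \<in> P
     \<and> (\<forall>p\<in>P. \<forall>q\<in>P. p \<otimes>\<^bsub>G\<^esub> q \<in> P)
     \<and> P \<inter> {inv\<^bsub>G\<^esub> p | p. p \<in> P} = {\<one>\<^bsub>G\<^esub>}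
     \<and> (\<forall>p\<in>P. \<forall>r\<in>P. (\<exists>u\<in>P. pos_le G P p u \<and> pos_le G P r u) \<longrightarrow>
          (\<exists>l\<in>P. pos_le G P p l \<and> pos_le G P r l \<and>
              (\<forall>u\<in>P. pos_le G P p u \<and> pos_le G P r u \<longrightarrow> pos_le G P l u)))"

text \<open>A small category given by an object set, a morphism set, range, source, composition
  (pg_comp a b is the composite "a b", defined when pg_src a = pg_rng b) and identities,
  together with a degree functor pg_deg into P.\<close>
record ('v, 'a, 'q) pgraph =
  pg_obj  :: "'v set"
  pg_mor  :: "'a set"
  pg_rng  :: "'a \<Rightarrow> 'v"
  pg_src  :: "'a \<Rightarrow> 'v"
  pg_comp :: "'a \<Rightarrow> 'a \<Rightarrow> 'a"
  pg_id   :: "'v \<Rightarrow> 'a"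
  pg_deg  :: "'a \<Rightarrow> 'q"

definition small_category :: "('v, 'a, 'q) pgraph \<Rightarrow> bool" where
  "small_category L \<longleftrightarrow>
     (\<forall>a\<in>pg_mor L. pg_rng L a \<in> pg_obj L \<and> pg_src L a \<in> pg_obj L)
   \<and> (\<forall>v\<in>pg_obj L. pg_id L v \<in> pg_mor L \<and> pg_rng L (pg_id L v) = v \<and> pg_src L (pg_id L v) = v)
   \<and> (\<forall>a\<in>pg_mor L. \<forall>b\<in>pg_mor L. pg_src L a = pg_rng L b \<longrightarrow>
        pg_comp L a b \<in> pg_mor L \<and> pg_rng L (pg_comp L a b) = pg_rng L a
        \<and> pg_src L (pg_comp L a b) = pg_src L b)
   \<and> (\<forall>a\<in>pg_mor L. \<forall>b\<in>pg_mor L. \<forall>c\<in>pg_mor L.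
        pg_src L a = pg_rng L b \<longrightarrow> pg_src L b = pg_rng L c \<longrightarrow>
        pg_comp L (pg_comp L a b) c = pg_comp L a (pg_comp L b c))
   \<and> (\<forall>a\<in>pg_mor L. pg_comp L (pg_id L (pg_rng L a)) a = a \<and> pg_comp L a (pg_id L (pg_src L a)) = a)"

definition is_pgraph :: "('q, 'b) monoid_scheme \<Rightarrow> 'q set \<Rightarrow> ('v, 'a, 'q) pgraph \<Rightarrow> bool" where
  "is_pgraph G P L \<longleftrightarrow>
     small_category L \<and> countable (pg_obj L) \<and> countable (pg_mor L)
   \<and> (\<forall>a\<in>pg_mor L. pg_deg L a \<in> P)
   \<and> (\<forall>v\<in>pg_obj L. pg_deg L (pg_id L v) = \<one>\<^bsub>G\<^esub>)
   \<and> (\<forall>a\<in>pg_mor L. \<forall>b\<in>pg_mor L. pg_src L a = pg_rng L b \<longrightarrow>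
        pg_deg L (pg_comp L a b) = pg_deg L a \<otimes>\<^bsub>G\<^esub> pg_deg L b)
   \<and> (\<forall>a\<in>pg_mor L. \<forall>p\<in>P. \<forall>q\<in>P. pg_deg L a = p \<otimes>\<^bsub>G\<^esub> q \<longrightarrow>
        (\<exists>!(b, c). b \<in> pg_mor L \<and> c \<in> pg_mor L \<and> pg_src L b = pg_rng L c
             \<and> a = pg_comp L b c \<and> pg_deg L b = p \<and> pg_deg L c = q))"

definition pg_deg_set :: "('v, 'a, 'q) pgraph \<Rightarrow> 'q \<Rightarrow> 'a set" where
  "pg_deg_set L m = {a \<in> pg_mor L. pg_deg L a = m}"

definition pg_ext :: "('v, 'a, 'q) pgraph \<Rightarrow> 'a \<Rightarrow> 'a set" where
  "pg_ext L a = {pg_comp L a b | b. b \<in> pg_mor L \<and> pg_src L a = pg_rng L b}"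

definition pg_prec :: "('v, 'a, 'q) pgraph \<Rightarrow> 'a \<Rightarrow> 'a \<Rightarrow> bool" where
  "pg_prec L b a \<longleftrightarrow> a \<in> pg_ext L b"

definition FA :: "('v, 'a, 'q) pgraph \<Rightarrow> 'a set" where
  "FA L = {a \<in> pg_mor L. \<forall>b\<in>pg_ext L a. \<forall>c\<in>pg_mor L.
      \<exists>J. finite J \<and> J \<subseteq> pg_mor L \<and> pg_ext L b \<inter> pg_ext L c = (\<Union>k\<in>J. pg_ext L k)}"

definition is_filter :: "('v, 'a, 'q) pgraph \<Rightarrow> 'a set \<Rightarrow> bool" where
  "is_filter L x \<longleftrightarrow> x \<noteq> {} \<and> x \<subseteq> pg_mor L
     \<and> (\<forall>a\<in>x. \<forall>b\<in>pg_mor L. pg_prec L b a \<longrightarrow> b \<in> x)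
     \<and> (\<forall>a\<in>x. \<forall>b\<in>x. \<exists>c\<in>x. pg_prec L a c \<and> pg_prec L b c)"

definition path_space :: "('v, 'a, 'q) pgraph \<Rightarrow> 'a set set" where
  "path_space L = {x. is_filter L x \<and> x \<inter> FA L \<noteq> {}}"

definition act_dom :: "('v, 'a, 'q) pgraph \<Rightarrow> 'q \<Rightarrow> 'a set set" where
  "act_dom L m = {x \<in> path_space L. x \<inter> pg_deg_set L m \<noteq> {}}"

text \<open>x(0,m) and the shift map T(x,m) (not needed for the directedness condition itself)\<close>
definition seg :: "('v, 'a, 'q) pgraph \<Rightarrow> 'a set \<Rightarrow> 'q \<Rightarrow> 'a" where
  "seg L x m = (THE a. a \<in> x \<inter> pg_deg_set L m)"

definition shift :: "('v, 'a, 'q) pgraph \<Rightarrow> 'a set \<Rightarrow> 'q \<Rightarrow> 'a set" where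
  "shift L x m = {b \<in> pg_mor L. pg_src L (seg L x m) = pg_rng L b \<and> pg_comp L (seg L x m) b \<in> x}"

end

theory Submission
  imports Defs
begin

lemma ub_from_x:
  assumes pg: "is_pgraph G P L"
    and x: "x \<in> act_dom L m \<inter> act_dom L n"
  shows "\<exists>c\<in>x. pg_deg L c \<in> P \<and> pos_le G P m (pg_deg L c) \<and> pos_le G P n (pg_deg L c)"
proof -
  from x obtain a b where a: "a \<in> x" "a \<in> pg_deg_set L m" and b: "b \<in> x" "b \<in> pg_deg_set L n"
    unfolding act_dom_def by blast
  have f: "is_filter L x" using x unfolding act_dom_def path_space_def by blast
  then obtain c where c: "c \<in> x" "pg_prec L a c" "pg_prec L b c"
    using a b unfolding is_filter_def by blast
  have cm: "c \<in> pg_mor L" using f c unfolding is_filter_def by blast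
  have am: "a \<in> pg_mor L" and bm: "b \<in> pg_mor L" using a b unfolding pg_deg_set_def by auto
  from c(2) obtain a' where a': "a' \<in> pg_mor L" "pg_src L a = pg_rng L a'" "c = pg_comp L a a'"
    unfolding pg_prec_def pg_ext_def by blast
  from c(3) obtain b' where b': "b' \<in> pg_mor L" "pg_src L b = pg_rng L b'" "c = pg_comp L b b'"
    unfolding pg_prec_def pg_ext_def by blast
  have "pg_deg L c = m \<otimes>\<^bsub>G\<^esub> pg_deg L a'"
    using pg a' am a unfolding is_pgraph_def pg_deg_set_def by auto
  moreover have "pg_deg L c = n \<otimes>\<^bsub>G\<^esub> pg_deg L b'"
    using pg b' bm b unfolding is_pgraph_def pg_deg_set_def by auto
  moreover have "pg_deg L a' \<in> P" "pg_deg L b' \<in> P" "pg_deg L c \<in> P"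
    using pg a' b' cm unfolding is_pgraph_def by auto
  ultimately show ?thesis using c(1) unfolding pos_le_def by metis
qed

theorem proposition5p10:
  fixes G :: "('q, 'b) monoid_scheme" and P :: "'q set"
    and L :: "('v, 'a, 'q) pgraph"
  assumes "wqlo G P"
    and "is_pgraph G P L"
    and "FA L \<noteq> {}"
  shows "\<forall>m\<in>P. \<forall>n\<in>P. act_dom L m \<inter> act_dom L n \<noteq> {} \<longrightarrow>
           (\<exists>l\<in>P. pos_le G P m l \<and> pos_le G P n l
                  \<and> act_dom L m \<inter> act_dom L n \<subseteq> act_dom L l)"
proof (intro ballI impI)
  fix m n assume mP: "m \<in> P" and nP: "n \<in> P" and ne: "act_dom L m \<inter> act_dom L n \<noteq> {}"
  then obtain x0 where "x0 \<in> act_dom L m \<inter> act_dom L n" by blast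
  then obtain c0 where "pg_deg L c0 \<in> P" "pos_le G P m (pg_deg L c0)" "pos_le G P n (pg_deg L c0)"
    using ub_from_x[OF assms(2)] by blast
  then obtain l where l: "l \<in> P" "pos_le G P m l" "pos_le G P n l"
    "\<forall>u\<in>P. pos_le G P m u \<and> pos_le G P n u \<longrightarrow> pos_le G P l u"
    using assms(1) mP nP unfolding wqlo_def by blast
  show "\<exists>l\<in>P. pos_le G P m l \<and> pos_le G P n l \<and> act_dom L m \<inter> act_dom L n \<subseteq> act_dom L l"
  proof (intro bexI conjI subsetI)
    fix x assume x: "x \<in> act_dom L m \<inter> act_dom L n"
    then obtain c where c: "c \<in> x" "pg_deg L c \<in> P" "pos_le G P m (pg_deg L c)" "pos_le G P n (pg_deg L c)"
      using ub_from_x[OF assms(2)] by blast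
    have f: "is_filter L x" and xp: "x \<in> path_space L" using x unfolding act_dom_def path_space_def by auto
    have cm: "c \<in> pg_mor L" using f c unfolding is_filter_def by blast
    from l(4) c obtain r where r: "r \<in> P" "l \<otimes>\<^bsub>G\<^esub> r = pg_deg L c" unfolding pos_le_def by blast
    then obtain c1 c2 where cc: "c1 \<in> pg_mor L" "c2 \<in> pg_mor L" "pg_src L c1 = pg_rng L c2"
      "c = pg_comp L c1 c2" "pg_deg L c1 = l"
    proof -
      have "\<exists>!(b, c'). b \<in> pg_mor L \<and> c' \<in> pg_mor L \<and> pg_src L b = pg_rng L c'
             \<and> c = pg_comp L b c' \<and> pg_deg L b = l \<and> pg_deg L c' = r"
      proof -
        have H: "\<forall>a\<in>pg_mor L. \<forall>p\<in>P. \<forall>q\<in>P. pg_deg L a = p \<otimes>\<^bsub>G\<^esub> q \<longrightarrow>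
          (\<exists>!(b, c). b \<in> pg_mor L \<and> c \<in> pg_mor L \<and> pg_src L b = pg_rng L c
             \<and> a = pg_comp L b c \<and> pg_deg L b = p \<and> pg_deg L c = q)"
          using assms(2) unfolding is_pgraph_def by blast
        show ?thesis using H[rule_format, OF cm l(1) r(1) r(2)[symmetric]] .
      qed
      then obtain p where "(\<lambda>(b, c'). b \<in> pg_mor L \<and> c' \<in> pg_mor L \<and> pg_src L b = pg_rng L c'
             \<and> c = pg_comp L b c' \<and> pg_deg L b = l \<and> pg_deg L c' = r) p" by (meson ex1E)
      then show ?thesis using that by (cases p) auto
    qed
    have "pg_prec L c1 c" using cc unfolding pg_prec_def pg_ext_def by blast
    hence "c1 \<in> x" using f c(1) cc(1) unfolding is_filter_def by blast
    then show "x \<in> act_dom L l" using xp cc unfolding act_dom_def pg_deg_set_def by blast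
  qed (use l in auto)
qed

end
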